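(* Let $c>0$, $\Delta_1,\dots,\Delta_K\in(0,1]$ and $T\ge K$, let $\Psi_c\ge0$ be the unique solution $x\ge0$ of \[ \sum_{i=1}^K\Big(\mathbb{I}\{x\le\ln\Delta_i^{-1}\}e^{2x}+\mathbb{I}\{x>\ln\Delta_i^{-1}\}\frac{x-\ln\Delta_i^{-1}+c/2}{c\Delta_i^2/2}\Big)=T, \] and let $(x_1^*,\dots,x_K^* )$ be the optimal solution of $\mathscr{P}_c(\{\max\{\Delta_i,e^{-\Psi_c}\}\}_{i=1}^K,T)$ given by $x_i^*=\mathbb{I}\{\Psi_c\le\ln\Delta_i^{-1}\}e^{2\Psi_c}+\mathbb{I}\{\Psi_c>\ln\Delta_i^{-1}\}\frac{\Psi_c-\ln\Delta_i^{-1}+c/2}{c\Delta_i^2/2}$. Then \[ \sum_{i=1}^K\exp(-c x_i^*\Delta_i^2)\le e^{c}\,\mathscr{P}_c(\{\max\{\Delta_i,e^{-\Psi_c}\}\}_{i=1}^K,T). \]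
   Context: For $c>0$, $T\ge0$ and positive reals $D_1,\dots,D_K$, $\mathscr{P}_c(\{D_i\}_{i=1}^K,T)$ denotes the optimal value of: minimize $\sum_{i=1}^K\exp(-cx_iD_i^2)$ subject to $x_1+\dots+x_K=T$, $x_i\ge0$. *)

theory Defs
  imports Complex_Main
begin

text \<open>Optimal value of the program P_c({D_i}_{i=1..K}, T):
  minimize sum_i exp(-c x_i D_i^2) subject to sum_i x_i = T, x_i >= 0.
  Vectors are functions nat => real restricted to the indices 1..K.\<close>
definition opt_val :: "real \<Rightarrow> (nat \<Rightarrow> real) \<Rightarrow> nat \<Rightarrow> real \<Rightarrow> real" where
  "opt_val c D K T =
     Inf ((\<lambda>x. \<Sum>i\<in>{1..K}. exp (- c * x i * (D i)^2)) `
          {x. (\<Sum>i\<in>{1..K}. x i) = T \<and> (\<forall>i\<in>{1..K}. 0 \<le> x i)})"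

end

theory Submission
  imports Defs
begin

lemma t1: fixes d P :: real assumes "d > 0" shows "P \<le> ln (1/d) \<longleftrightarrow> d \<le> exp (-P)"
proof -
  have "ln (1/d) = - ln d" using assms by (simp add: ln_div)
  moreover have "d \<le> exp (-P) \<longleftrightarrow> ln d \<le> ln (exp (-P))"
    using assms by (subst ln_le_cancel_iff) auto
  ultimately show ?thesis by auto
qed
lemma t2: fixes c d a :: real assumes "c > 0" "d > 0"
  shows "c * (a / (c * d^2 / 2)) * d^2 = 2 * a"
proof -
  have "c * d^2 \<noteq> 0" using assms by simp
  then show ?thesis by (simp add: field_simps)
qed
lemma key:
  fixes c P d x :: real
  assumes c: "c > 0" and d: "0 < d" "d \<le> 1" and P: "P \<ge> 0"
    and x: "x = (if P \<le> ln (1 / d) then exp (2 * P)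
         else (P - ln (1 / d) + c / 2) / (c * d^2 / 2))"
  shows "c * x * (max d (exp (-P)))^2 = 2 * (P + ln (max d (exp (-P)))) + c"
    and "exp (- c * x * d^2) \<le> exp c * exp (- c * x * (max d (exp (-P)))^2)"
    and "x \<ge> 0"
proof -
  have lnd: "ln (1/d) = - ln d" using d by (simp add: ln_div)
  have iff: "P \<le> ln (1/d) \<longleftrightarrow> d \<le> exp (-P)" using t1 d by blast
  have e1: "exp (2*P) * exp (-P)^2 = 1"
    unfolding power2_eq_square mult_2 exp_add[symmetric] by simp
  show "c * x * (max d (exp (-P)))^2 = 2 * (P + ln (max d (exp (-P)))) + c"
  proof (cases "P \<le> ln (1/d)")
    case True
    then have m: "max d (exp (-P)) = exp (-P)" using iff by auto
    have "c * x * (max d (exp (-P)))^2 = c * (exp (2*P) * exp (-P)^2)"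
      using True x m by simp
    then show ?thesis using e1 m by simp
  next
    case False
    then have m: "max d (exp (-P)) = d" using iff by auto
    have xF: "x = (P - ln (1 / d) + c / 2) / (c * d^2 / 2)" using False x by simp
    have "c * x * (max d (exp (-P)))^2 = 2 * (P - ln (1 / d) + c / 2)"
      unfolding m xF by (rule t2[OF c d(1)])
    then show ?thesis using m lnd by simp
  qed
  show "exp (- c * x * d^2) \<le> exp c * exp (- c * x * (max d (exp (-P)))^2)"
  proof (cases "P \<le> ln (1/d)")
    case True
    then have m: "max d (exp (-P)) = exp (-P)" using iff by auto
    have "c * x * (max d (exp (-P)))^2 = c * (exp (2*P) * exp (-P)^2)"
      using True x m by simp
    then have "exp c * exp (- c * x * (max d (exp (-P)))^2) = 1"
      using e1 by (simp flip: exp_add)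
    moreover have "c * x * d^2 \<ge> 0" using True x c by simp
    then have "exp (- c * x * d^2) \<le> 1" by simp
    ultimately show ?thesis by simp
  next
    case False
    then have "max d (exp (-P)) = d" using iff by auto
    then show ?thesis using c by simp
  qed
  show "x \<ge> 0"
  proof (cases "P \<le> ln (1/d)")
    case True then show ?thesis using x by simp
  next
    case False
    then have "P - ln (1/d) + c/2 > 0" using c by simp
    then show ?thesis using False x c d by simp
  qed
qed

theorem lemma5:
  fixes c T \<Psi> :: real and K :: nat and \<Delta> :: "nat \<Rightarrow> real"
  assumes c_pos: "c > 0"
    and \<Delta>_range: "\<forall>i\<in>{1..K}. 0 < \<Delta> i \<and> \<Delta> i \<le> 1"
    and T_ge: "T \<ge> real K"
    and \<Psi>_nonneg: "\<Psi> \<ge> 0"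
    and \<Psi>_eq: "(\<Sum>i\<in>{1..K}.
        (if \<Psi> \<le> ln (1 / \<Delta> i) then exp (2 * \<Psi>)
         else (\<Psi> - ln (1 / \<Delta> i) + c / 2) / (c * (\<Delta> i)^2 / 2))) = T"
    and \<Psi>_unique: "\<forall>y\<ge>0. (\<Sum>i\<in>{1..K}.
        (if y \<le> ln (1 / \<Delta> i) then exp (2 * y)
         else (y - ln (1 / \<Delta> i) + c / 2) / (c * (\<Delta> i)^2 / 2))) = T \<longrightarrow> y = \<Psi>"
    and xstar_def: "\<forall>i. xstar i =
        (if \<Psi> \<le> ln (1 / \<Delta> i) then exp (2 * \<Psi>)
         else (\<Psi> - ln (1 / \<Delta> i) + c / 2) / (c * (\<Delta> i)^2 / 2))"
  shows "(\<Sum>i\<in>{1..K}. exp (- c * xstar i * (\<Delta> i)^2))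
           \<le> exp c * opt_val c (\<lambda>i. max (\<Delta> i) (exp (- \<Psi>))) K T"
  proof -
  define D where "D i = max (\<Delta> i) (exp (- \<Psi>))" for i
  define g where "g i = exp (- c * xstar i * (D i)^2)" for i
  define \<mu> where "\<mu> = c * exp (- c - 2 * \<Psi>)"
  have Dpos: "D i > 0" for i unfolding D_def by (simp add: less_max_iff_disj)
  have k1: "c * xstar i * (D i)^2 = 2 * (\<Psi> + ln (D i)) + c" if "i \<in> {1..K}" for i
    using key(1)[OF c_pos _ _ \<Psi>_nonneg xstar_def[rule_format, of i]] \<Delta>_range that
    unfolding D_def by auto
  have k2: "exp (- c * xstar i * (\<Delta> i)^2) \<le> exp c * g i" if "i \<in> {1..K}" for i
    using key(2)[OF c_pos _ _ \<Psi>_nonneg xstar_def[rule_format, of i]] \<Delta>_range that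
    unfolding D_def g_def by auto
  have k3: "xstar i \<ge> 0" if "i \<in> {1..K}" for i
    using key(3)[OF c_pos _ _ \<Psi>_nonneg xstar_def[rule_format, of i]] \<Delta>_range that
    by auto
  have mu: "c * (D i)^2 * g i = \<mu>" if "i \<in> {1..K}" for i
  proof -
    have "exp (2 * ln (D i)) = (exp (ln (D i)))^2"
      unfolding mult_2 exp_add power2_eq_square ..
    then have "(D i)^2 = exp (2 * ln (D i))"
      using Dpos[of i] by simp
    moreover have "g i = exp (- (2 * (\<Psi> + ln (D i)) + c))"
      unfolding g_def using k1[OF that] by (simp add: algebra_simps)
    ultimately have "c * (D i)^2 * g i = c * exp (2 * ln (D i) + (- (2 * (\<Psi> + ln (D i)) + c)))"
      by (simp only: exp_add mult.assoc)
    also have "\<dots> = \<mu>" unfolding \<mu>_def by (simp add: algebra_simps)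
    finally show ?thesis .
  qed
  have sumx: "(\<Sum>i\<in>{1..K}. xstar i) = T" using \<Psi>_eq xstar_def by simp
  have lower: "(\<Sum>i\<in>{1..K}. g i) \<le> (\<Sum>i\<in>{1..K}. exp (- c * x i * (D i)^2))"
    if x: "(\<Sum>i\<in>{1..K}. x i) = T" for x
  proof -
    have "g i - \<mu> * (x i - xstar i) \<le> exp (- c * x i * (D i)^2)" if i: "i \<in> {1..K}" for i
    proof -
      have "exp (- c * x i * (D i)^2) = g i * exp (- (c * (D i)^2) * (x i - xstar i))"
        unfolding g_def exp_add[symmetric] by (rule arg_cong[where f=exp]) (simp add: algebra_simps)
      also have "\<dots> \<ge> g i * (1 + (- (c * (D i)^2) * (x i - xstar i)))"
        unfolding g_def by (intro mult_left_mono exp_ge_add_one_self) auto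
      moreover have "g i * (1 + (- (c * (D i)^2) * (x i - xstar i)))
          = g i - (c * (D i)^2 * g i) * (x i - xstar i)" by (simp add: algebra_simps)
      ultimately show ?thesis using mu[OF i] by simp
    qed
    then have "(\<Sum>i\<in>{1..K}. g i - \<mu> * (x i - xstar i)) \<le> (\<Sum>i\<in>{1..K}. exp (- c * x i * (D i)^2))"
      by (rule sum_mono)
    moreover have "(\<Sum>i\<in>{1..K}. g i - \<mu> * (x i - xstar i)) = (\<Sum>i\<in>{1..K}. g i)"
      unfolding sum_subtractf sum_distrib_left[symmetric] using x sumx by simp
    ultimately show ?thesis by simp
  qed
  have low: "(\<Sum>i\<in>{1..K}. g i) \<le> opt_val c D K T"
    unfolding opt_val_def
  proof (rule cInf_greatest)
    show "(\<lambda>x. \<Sum>i\<in>{1..K}. exp (- c * x i * (D i)^2)) `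
          {x. (\<Sum>i\<in>{1..K}. x i) = T \<and> (\<forall>i\<in>{1..K}. 0 \<le> x i)} \<noteq> {}"
      using sumx k3 by blast
  next
    fix y assume "y \<in> (\<lambda>x. \<Sum>i\<in>{1..K}. exp (- c * x i * (D i)^2)) `
          {x. (\<Sum>i\<in>{1..K}. x i) = T \<and> (\<forall>i\<in>{1..K}. 0 \<le> x i)}"
    then show "(\<Sum>i\<in>{1..K}. g i) \<le> y" using lower by blast
  qed
  have up: "(\<Sum>i\<in>{1..K}. exp (- c * xstar i * (\<Delta> i)^2)) \<le> exp c * (\<Sum>i\<in>{1..K}. g i)"
    unfolding sum_distrib_left by (rule sum_mono) (rule k2)
  show ?thesis
  proof -
    have "exp c * (\<Sum>i\<in>{1..K}. g i) \<le> exp c * opt_val c D K T"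
      using low by (intro mult_left_mono) auto
    then have h: "(\<Sum>i\<in>{1..K}. exp (- c * xstar i * (\<Delta> i)^2)) \<le> exp c * opt_val c D K T"
      by (rule order_trans[OF up])
    have De: "D = (\<lambda>i. max (\<Delta> i) (exp (- \<Psi>)))" unfolding D_def by (rule refl)
    show ?thesis using h unfolding De .
  qed
qed

end
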